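(* For every $\varepsilon>0$ there exists a II-polyhedral real Banach space $X$ such that the closed unit ball $B_X$ contains a slice of diameter smaller than $\varepsilon$.
   Context: All Banach spaces are real. For a Banach space $X$, $B_X$ and $S_X$ denote the closed unit ball and unit sphere, $X^*$ the dual, and $Ext(B_{X^*})$ the set of extreme points of $B_{X^*}$. For a set $A\subseteq X^*$, $A'$ denotes the set of accumulation points of $A$ in the weak$^*$ topology of $X^*$. $X$ is called II-polyhedral if there exists $0<r<1$ such that $(Ext B_{X^*})'\subseteq rB_{X^*}$. A slice of a bounded set $C\subseteq X$ is a set of the form $S(C,f,\alpha)=\{x\in C: f(x)>\sup f(C)-\alpha\}$ with $f\in X^*$ (nonzero) and $\alpha>0$. *)

theory Defs
  imports "HOL-Analysis.Analysis"
begin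

text \<open>A Banach space is modelled as a closed linear subspace X of an ambient
real Banach type 'a. Functionals on X are represented extensionally as
functions 'a => real that vanish outside X.\<close>

definition dual_space :: "'a::real_normed_vector set \<Rightarrow> ('a \<Rightarrow> real) set" where
  "dual_space X = {f. (\<forall>x\<in>X. \<forall>y\<in>X. f (x + y) = f x + f y)
                     \<and> (\<forall>c. \<forall>x\<in>X. f (c *\<^sub>R x) = c * f x)
                     \<and> (\<forall>z. z \<notin> X \<longrightarrow> f z = 0)
                     \<and> (\<exists>C. \<forall>x\<in>X. \<bar>f x\<bar> \<le> C * norm x)}"

definition dual_ball :: "'a::real_normed_vector set \<Rightarrow> real \<Rightarrow> ('a \<Rightarrow> real) set" where
  "dual_ball X r = {f \<in> dual_space X. \<forall>x\<in>X. \<bar>f x\<bar> \<le> r * norm x}"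

definition dual_ext :: "'a::real_normed_vector set \<Rightarrow> ('a \<Rightarrow> real) set" where
  "dual_ext X = {f \<in> dual_ball X 1. \<forall>g\<in>dual_ball X 1. \<forall>h\<in>dual_ball X 1.
                    f = (\<lambda>x. (g x + h x) / 2) \<longrightarrow> g = h}"

text \<open>A': weak* accumulation points in X* of a set A of functionals.
Basic weak* neighbourhoods of g are given by finite F \<subseteq> X and \<delta> > 0.\<close>
definition weak_star_acc :: "'a::real_normed_vector set \<Rightarrow> ('a \<Rightarrow> real) set \<Rightarrow> ('a \<Rightarrow> real) set" where
  "weak_star_acc X A = {g \<in> dual_space X. \<forall>F \<delta>. finite F \<and> F \<subseteq> X \<and> \<delta> > 0 \<longrightarrow>
       (\<exists>h\<in>A. h \<noteq> g \<and> (\<forall>x\<in>F. \<bar>h x - g x\<bar> < \<delta>))}"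

definition II_polyhedral :: "'a::real_normed_vector set \<Rightarrow> bool" where
  "II_polyhedral X \<longleftrightarrow> (\<exists>r. 0 < r \<and> r < 1 \<and> weak_star_acc X (dual_ext X) \<subseteq> dual_ball X r)"

definition unit_ball_of :: "'a::real_normed_vector set \<Rightarrow> 'a set" where
  "unit_ball_of X = X \<inter> cball 0 1"

definition slice :: "'a set \<Rightarrow> ('a \<Rightarrow> real) \<Rightarrow> real \<Rightarrow> 'a set" where
  "slice C f \<alpha> = {x \<in> C. f x > Sup (f ` C) - \<alpha>}"

end

theory Submission
  imports Defs
begin


definition mkB :: "(nat \<Rightarrow> real) \<Rightarrow> (nat \<Rightarrow>\<^sub>C real)" where "mkB f = Bcontfun f"

lemma mkB_apply: assumes "\<And>j. \<bar>f j\<bar> \<le> b" shows "apply_bcontfun (mkB f) = f"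
  unfolding mkB_def
  by (rule Bcontfun_inverse) (auto intro!: bcontfun_normI assms)

lemma nat_cases3: fixes j :: nat obtains "j = 0" | k where "j = 2*k+1" | k where "j = 2*k+2"
proof -
  have "j = 0 \<or> (\<exists>k. j = 2*k+1) \<or> (\<exists>k. j = 2*k+2)"
    by presburger
  then show ?thesis using that by blast
qed

lemma coord_le: "\<bar>apply_bcontfun (y::nat \<Rightarrow>\<^sub>C real) j\<bar> \<le> norm y"
  using norm_bounded[of y j] by simp

lemma norm_le_coord: "(\<And>j. \<bar>apply_bcontfun (y::nat \<Rightarrow>\<^sub>C real) j\<bar> \<le> b) \<Longrightarrow> norm y \<le> b"
  using norm_bound[of y b] by simp

locale hexa = fixes a :: real assumes a0: "0 < a" and a1: "a < 1"
begin

definition XX :: "(nat \<Rightarrow>\<^sub>C real) set" where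
  "XX = {y. (\<forall>n. apply_bcontfun y (2*n+1) + apply_bcontfun y (2*n+2) = 2*a*apply_bcontfun y 0)
          \<and> (\<lambda>n. apply_bcontfun y (2*n+1) - apply_bcontfun y (2*n+2)) \<longlonglongrightarrow> 0}"

definition zc :: "(nat \<Rightarrow>\<^sub>C real) \<Rightarrow> nat \<Rightarrow> real" where
  "zc y n = (apply_bcontfun y (2*n+1) - apply_bcontfun y (2*n+2)) / 2"

definition u0 :: "nat \<Rightarrow>\<^sub>C real" where "u0 = mkB (\<lambda>j. if j = 0 then 1 else a)"
definition vv :: "nat \<Rightarrow> nat \<Rightarrow>\<^sub>C real" where
  "vv n = mkB (\<lambda>j. if j = 2*n+1 then 1 else if j = 2*n+2 then -1 else 0)"

lemma u0_apply: "apply_bcontfun u0 j = (if j = 0 then 1 else a)"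
  unfolding u0_def using a0 a1 by (subst mkB_apply[where b=1]) auto

lemma vv_apply: "apply_bcontfun (vv n) j = (if j = 2*n+1 then 1 else if j = 2*n+2 then -1 else 0)"
  unfolding vv_def by (subst mkB_apply[where b=1]) auto

lemma XX_odd: "y \<in> XX \<Longrightarrow> apply_bcontfun y (2*n+1) = a * apply_bcontfun y 0 + zc y n"
  unfolding XX_def zc_def by (auto simp: field_simps)

lemma XX_even: "y \<in> XX \<Longrightarrow> apply_bcontfun y (2*n+2) = a * apply_bcontfun y 0 - zc y n"
  unfolding XX_def zc_def by (auto simp: field_simps)

lemma zc_tendsto: "y \<in> XX \<Longrightarrow> zc y \<longlonglongrightarrow> 0"
proof -
  assume "y \<in> XX"
  then have "(\<lambda>n. apply_bcontfun y (2*n+1) - apply_bcontfun y (2*n+2)) \<longlonglongrightarrow> 0" unfolding XX_def by auto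
  from tendsto_divide[OF this tendsto_const[of 2]] show ?thesis unfolding zc_def[abs_def] by simp
qed

lemma zc_add: "zc (y + w) n = zc y n + zc w n" unfolding zc_def by (simp add: field_simps)
lemma zc_scale: "zc (c *\<^sub>R y) n = c * zc y n" unfolding zc_def by (simp add: field_simps)
lemma zc_u0: "zc u0 n = 0" unfolding zc_def by (simp add: u0_apply)
lemma zc_vv: "zc (vv m) n = (if n = m then 1 else 0)" unfolding zc_def by (simp add: vv_apply)

lemma subspace_XX: "subspace XX"
  unfolding subspace_def XX_def
proof (intro conjI ballI allI)
  fix x y assume x: "x \<in> {y. (\<forall>n. apply_bcontfun y (2*n+1) + apply_bcontfun y (2*n+2) = 2*a*apply_bcontfun y 0)
          \<and> (\<lambda>n. apply_bcontfun y (2*n+1) - apply_bcontfun y (2*n+2)) \<longlonglongrightarrow> 0}"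
    and y: "y \<in> {y. (\<forall>n. apply_bcontfun y (2*n+1) + apply_bcontfun y (2*n+2) = 2*a*apply_bcontfun y 0)
          \<and> (\<lambda>n. apply_bcontfun y (2*n+1) - apply_bcontfun y (2*n+2)) \<longlonglongrightarrow> 0}"
  from tendsto_add[OF conjunct2[OF x[simplified]] conjunct2[OF y[simplified]]] x y
  show "x + y \<in> {y. (\<forall>n. apply_bcontfun y (2*n+1) + apply_bcontfun y (2*n+2) = 2*a*apply_bcontfun y 0)
          \<and> (\<lambda>n. apply_bcontfun y (2*n+1) - apply_bcontfun y (2*n+2)) \<longlonglongrightarrow> 0}"
    by (auto simp: algebra_simps)
next
  fix c x assume x: "x \<in> {y. (\<forall>n. apply_bcontfun y (2*n+1) + apply_bcontfun y (2*n+2) = 2*a*apply_bcontfun y 0)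
          \<and> (\<lambda>n. apply_bcontfun y (2*n+1) - apply_bcontfun y (2*n+2)) \<longlonglongrightarrow> 0}"
  from tendsto_mult[OF tendsto_const[of c] conjunct2[OF x[simplified]]] x
  show "c *\<^sub>R x \<in> {y. (\<forall>n. apply_bcontfun y (2*n+1) + apply_bcontfun y (2*n+2) = 2*a*apply_bcontfun y 0)
          \<and> (\<lambda>n. apply_bcontfun y (2*n+1) - apply_bcontfun y (2*n+2)) \<longlonglongrightarrow> 0}"
    by (auto simp: algebra_simps) (metis distrib_left mult.left_commute)
qed simp

lemma u0_XX: "u0 \<in> XX" unfolding XX_def by (simp add: u0_apply)

lemma vv_odd: "apply_bcontfun (vv i) (2*k+1) = (if i = k then 1 else 0)"
  by (simp add: vv_apply)
lemma vv_even: "apply_bcontfun (vv i) (2*k+2) = (if i = k then -1 else 0)"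
  by (simp add: vv_apply)
lemma vv_odd' [simp]: "apply_bcontfun (vv i) (Suc (2*k)) = (if i = k then 1 else 0)"
  using vv_odd[of i k] by simp
lemma vv_even' [simp]: "apply_bcontfun (vv i) (Suc (Suc (2*k))) = (if i = k then -1 else 0)"
  using vv_even[of i k] by simp
lemma vv_zero [simp]: "apply_bcontfun (vv i) 0 = 0"
  by (simp add: vv_apply)

lemma vv_XX: "vv m \<in> XX"
proof -
  have ev: "eventually (\<lambda>n. apply_bcontfun (vv m) (2*n+1) - apply_bcontfun (vv m) (2*n+2) = 0) sequentially"
    using eventually_gt_at_top[of m] by eventually_elim simp
  have "(\<lambda>n. apply_bcontfun (vv m) (2*n+1) - apply_bcontfun (vv m) (2*n+2)) \<longlonglongrightarrow> 0"
    by (rule tendsto_eventually[OF ev])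
  then show ?thesis unfolding XX_def by (simp add: vv_odd vv_even vv_zero)
qed

lemma abs_aux: "0 < (a::real) \<Longrightarrow> a * \<bar>x\<bar> + \<bar>z\<bar> = max \<bar>a*x + z\<bar> \<bar>a*x - z\<bar>"
proof -
  assume a: "0 < a"
  have "\<bar>a*x\<bar> = a*\<bar>x\<bar>" using a by (simp add: abs_mult)
  moreover have "max \<bar>p + z\<bar> \<bar>p - z\<bar> = \<bar>p\<bar> + \<bar>z\<bar>" for p :: real
    by (auto simp: max_def abs_if)
  ultimately show ?thesis by metis
qed

lemma norm_XX_ge: "y \<in> XX \<Longrightarrow> a * \<bar>apply_bcontfun y 0\<bar> + \<bar>zc y n\<bar> \<le> norm y"
  using coord_le[of y "2*n+1"] coord_le[of y "2*n+2"] XX_odd[of y n] XX_even[of y n]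
    abs_aux[OF a0, of "apply_bcontfun y 0" "zc y n"] by auto

lemma norm_XX_le:
  assumes "y \<in> XX" "\<bar>apply_bcontfun y 0\<bar> \<le> M" "\<And>n. a * \<bar>apply_bcontfun y 0\<bar> + \<bar>zc y n\<bar> \<le> M"
  shows "norm y \<le> M"
proof (rule norm_le_coord)
  fix j :: nat
  show "\<bar>apply_bcontfun y j\<bar> \<le> M"
  proof (cases j rule: nat_cases3)
    case 1 then show ?thesis using assms by simp
  next
    case (2 k) then show ?thesis using assms(3)[of k] XX_odd[OF assms(1), of k]
        abs_aux[OF a0, of "apply_bcontfun y 0" "zc y k"] by simp
  next
    case (3 k) then show ?thesis using assms(3)[of k] XX_even[OF assms(1), of k]
        abs_aux[OF a0, of "apply_bcontfun y 0" "zc y k"] by simp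
  qed
qed

lemma norm_u0: "norm u0 \<le> 1"
  by (rule norm_le_coord) (use a0 a1 in \<open>simp add: u0_apply\<close>)

lemma norm_vv: "norm (vv n) \<le> 1"
  by (rule norm_le_coord) (simp add: vv_apply)

lemma coord_tendsto:
  assumes "x \<longlonglongrightarrow> (l :: nat \<Rightarrow>\<^sub>C real)"
  shows "(\<lambda>i. apply_bcontfun (x i) j) \<longlonglongrightarrow> apply_bcontfun l j"
proof -
  have tn: "(\<lambda>i. norm (x i - l)) \<longlonglongrightarrow> 0" using assms by (simp add: tendsto_norm_zero_iff LIM_zero_iff)
  have le: "norm (apply_bcontfun (x i) j - apply_bcontfun l j) \<le> norm (x i - l)" for i
    using coord_le[of "x i - l" j] by simp
  have "(\<lambda>i. apply_bcontfun (x i) j - apply_bcontfun l j) \<longlonglongrightarrow> 0"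
    by (rule Lim_null_comparison[OF always_eventually[OF allI[OF le]] tn])
  then show ?thesis by (simp add: LIM_zero_iff)
qed

lemma closed_XX: "closed XX"
  unfolding closed_sequential_limits
proof (intro allI impI, elim conjE)
  fix x :: "nat \<Rightarrow> nat \<Rightarrow>\<^sub>C real" and l
  assume xs: "\<forall>n. x n \<in> XX" and lim: "x \<longlonglongrightarrow> l"
  have eq: "apply_bcontfun l (2*n+1) + apply_bcontfun l (2*n+2) = 2*a*apply_bcontfun l 0" for n
  proof -
    have "(\<lambda>i. apply_bcontfun (x i) (2*n+1) + apply_bcontfun (x i) (2*n+2)) \<longlonglongrightarrow>
            apply_bcontfun l (2*n+1) + apply_bcontfun l (2*n+2)"
      by (intro tendsto_add coord_tendsto lim)
    moreover have "(\<lambda>i. apply_bcontfun (x i) (2*n+1) + apply_bcontfun (x i) (2*n+2)) \<longlonglongrightarrow>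
            2*a*apply_bcontfun l 0"
      using xs unfolding XX_def by (simp add: tendsto_mult_left coord_tendsto[OF lim])
    ultimately show ?thesis by (rule LIMSEQ_unique)
  qed
  have "(\<lambda>n. apply_bcontfun l (2*n+1) - apply_bcontfun l (2*n+2)) \<longlonglongrightarrow> 0"
  proof (rule LIMSEQ_I)
    fix r :: real assume r: "0 < r"
    have "\<exists>i. norm (x i - l) < r/4"
      using lim r unfolding LIMSEQ_def dist_norm by (metis divide_pos_pos zero_less_numeral order_refl)
    then obtain i where i: "norm (x i - l) < r/4" by blast
    have "(\<lambda>n. apply_bcontfun (x i) (2*n+1) - apply_bcontfun (x i) (2*n+2)) \<longlonglongrightarrow> 0"
      using xs unfolding XX_def by auto
    then obtain N where N: "\<And>n. n \<ge> N \<Longrightarrow> norm (apply_bcontfun (x i) (2*n+1) - apply_bcontfun (x i) (2*n+2) - 0) < r/2"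
      using r unfolding LIMSEQ_def dist_norm by (metis divide_pos_pos zero_less_numeral)
    show "\<exists>N. \<forall>n\<ge>N. norm (apply_bcontfun l (2*n+1) - apply_bcontfun l (2*n+2) - 0) < r"
    proof (intro exI allI impI)
      fix n assume "n \<ge> N"
      have c1: "\<bar>apply_bcontfun (x i) j - apply_bcontfun l j\<bar> \<le> norm (x i - l)" for j
        using coord_le[of "x i - l" j] by simp
      show "norm (apply_bcontfun l (2*n+1) - apply_bcontfun l (2*n+2) - 0) < r"
        using N[OF \<open>n \<ge> N\<close>] c1[of "2*n+1"] c1[of "2*n+2"] i
        unfolding real_norm_def diff_0_right by (simp only: abs_less_iff abs_le_iff) linarith
    qed
  qed
  with eq show "l \<in> XX" unfolding XX_def by simp
qed

lemma apply_sum: "finite A \<Longrightarrow> apply_bcontfun (sum g A) j = (\<Sum>i\<in>A. apply_bcontfun (g i) j)"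
  by (induction A rule: finite_induct) auto

definition trunc :: "nat \<Rightarrow> (nat \<Rightarrow>\<^sub>C real) \<Rightarrow> (nat \<Rightarrow>\<^sub>C real)" where
  "trunc N y = apply_bcontfun y 0 *\<^sub>R u0 + (\<Sum>k<N. zc y k *\<^sub>R vv k)"

lemma trunc_XX: "trunc N y \<in> XX"
  unfolding trunc_def
  by (intro subspace_add[OF subspace_XX] subspace_scale[OF subspace_XX] subspace_sum[OF subspace_XX] u0_XX vv_XX)

lemma sum_delta1 [simp]: "(\<Sum>i<(N::nat). c i * (if i = k then 1 else 0)) = (if k < N then (c k::real) else 0)"
  by (induction N) (auto simp: less_Suc_eq)
lemma sum_delta2 [simp]: "(\<Sum>i<(N::nat). c i * (if i = k then -1 else 0)) = (if k < N then - (c k::real) else 0)"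
  by (induction N) (auto simp: less_Suc_eq)

lemma trunc_err:
  assumes "y \<in> XX" "\<And>k. k \<ge> N \<Longrightarrow> \<bar>zc y k\<bar> \<le> e" "0 \<le> e"
  shows "norm (y - trunc N y) \<le> e"
proof (rule norm_le_coord)
  fix j :: nat
  show "\<bar>apply_bcontfun (y - trunc N y) j\<bar> \<le> e"
  proof (cases j rule: nat_cases3)
    case 1 then show ?thesis using assms by (simp add: trunc_def apply_sum u0_apply vv_zero)
  next
    case (2 k) then show ?thesis using assms XX_odd[OF assms(1), of k]
      by (simp add: trunc_def apply_sum u0_apply)
  next
    case (3 k) then show ?thesis using assms XX_even[OF assms(1), of k]
      by (simp add: trunc_def apply_sum u0_apply)
  qed
qed

lemma dual_add: "f \<in> dual_space XX \<Longrightarrow> x \<in> XX \<Longrightarrow> y \<in> XX \<Longrightarrow> f (x + y) = f x + f y"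
  unfolding dual_space_def by auto
lemma dual_scale: "f \<in> dual_space XX \<Longrightarrow> x \<in> XX \<Longrightarrow> f (c *\<^sub>R x) = c * f x"
  unfolding dual_space_def by auto
lemma dual_out: "f \<in> dual_space XX \<Longrightarrow> x \<notin> XX \<Longrightarrow> f x = 0"
  unfolding dual_space_def by auto
lemma dual_diff: "f \<in> dual_space XX \<Longrightarrow> x \<in> XX \<Longrightarrow> y \<in> XX \<Longrightarrow> f (x - y) = f x - f y"
  using dual_add[of f x "-y"] dual_scale[of f y "-1"] subspace_neg[OF subspace_XX, of y]
  by simp
lemma dual_bound: "f \<in> dual_space XX \<Longrightarrow> \<exists>C. \<forall>x\<in>XX. \<bar>f x\<bar> \<le> C * norm x"
  unfolding dual_space_def by auto

lemma dual_sum: assumes "f \<in> dual_space XX" "\<And>i. i \<in> A \<Longrightarrow> g i \<in> XX" "finite A"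
  shows "f (sum g A) = (\<Sum>i\<in>A. f (g i))"
  using assms(3,2)
proof (induction A rule: finite_induct)
  case empty
  have "f (0 *\<^sub>R 0) = 0 * f 0" by (rule dual_scale[OF assms(1) subspace_0[OF subspace_XX]])
  then show ?case by simp
next
  case (insert x F)
  then show ?case by (simp add: dual_add[OF assms(1)] subspace_sum[OF subspace_XX])
qed

lemma dual_trunc: "f \<in> dual_space XX \<Longrightarrow>
   f (trunc N y) = apply_bcontfun y 0 * f u0 + (\<Sum>k<N. zc y k * f (vv k))"
  unfolding trunc_def
  by (simp add: dual_add dual_scale dual_sum u0_XX vv_XX subspace_sum[OF subspace_XX] subspace_scale[OF subspace_XX])

lemma determ:
  assumes f: "f \<in> dual_space XX" and fu: "f u0 = 0" and fv: "\<And>k. f (vv k) = 0"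
  shows "f y = 0"
proof (cases "y \<in> XX")
  case False then show ?thesis using dual_out[OF f] by simp
next
  case y: True
  obtain C0 where C0: "\<forall>x\<in>XX. \<bar>f x\<bar> \<le> C0 * norm x" using dual_bound[OF f] by blast
  define C where "C = max C0 0"
  have C: "\<forall>x\<in>XX. \<bar>f x\<bar> \<le> C * norm x"
    using C0 unfolding C_def by (meson max.cobounded1 mult_right_mono norm_ge_zero order_trans)
  have C0': "C \<ge> 0" unfolding C_def by simp
  have bnd: "\<bar>f y\<bar> \<le> C * e" if e: "e > 0" for e
  proof -
    obtain N where N: "\<And>k. k \<ge> N \<Longrightarrow> \<bar>zc y k\<bar> < e"
      using zc_tendsto[OF y] e unfolding LIMSEQ_def dist_norm by auto
    have err: "norm (y - trunc N y) \<le> e" using N e by (intro trunc_err[OF y]) (auto intro: less_imp_le)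
    have "f y = f (y - trunc N y)" using dual_diff[OF f y trunc_XX] dual_trunc[OF f] fu fv by simp
    then have "\<bar>f y\<bar> \<le> C * norm (y - trunc N y)"
      using C subspace_diff[OF subspace_XX y trunc_XX] by metis
    then show ?thesis using err C0' by (meson mult_left_mono order_trans)
  qed
  show ?thesis
  proof (rule ccontr)
    assume ne: "f y \<noteq> 0"
    define e where "e = \<bar>f y\<bar> / (2 * (C + 1))"
    have e: "e > 0" using ne C0' unfolding e_def by simp
    have "C * e < \<bar>f y\<bar>" using ne C0' unfolding e_def by (simp add: field_simps) (simp add: add_nonneg_pos)
    with bnd[OF e] show False by simp
  qed
qed


end



definition HX :: "real \<Rightarrow> real \<Rightarrow> real \<Rightarrow> bool" where
  "HX a t s \<longleftrightarrow> \<bar>s\<bar> \<le> 1 \<and> \<bar>t\<bar> + (1-a)*\<bar>s\<bar> \<le> 1"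
definition vertex :: "real \<Rightarrow> real \<Rightarrow> real \<Rightarrow> bool" where
  "vertex a t s \<longleftrightarrow> (s = 0 \<and> \<bar>t\<bar> = 1) \<or> (\<bar>s\<bar> = 1 \<and> \<bar>t\<bar> = a)"

lemma sgn_abs_add: "t \<noteq> 0 \<Longrightarrow> c \<ge> 0 \<Longrightarrow> \<bar>t + sgn t * c\<bar> = \<bar>t\<bar> + (c::real)"
  by (cases "t > 0"; cases "t < 0") (auto simp: sgn_if)
lemma sgn_abs_sub: "0 \<le> c \<Longrightarrow> c \<le> \<bar>t\<bar> \<Longrightarrow> \<bar>t - sgn t * c\<bar> = \<bar>t\<bar> - (c::real)"
  by (cases "t > 0"; cases "t < 0") (auto simp: sgn_if)

lemma hexagon:
  assumes a0: "0 < a" and a1: "a < 1" and H: "HX a t s" and nv: "\<not> vertex a t s"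
  shows "\<exists>p q. (p \<noteq> 0 \<or> q \<noteq> 0) \<and> HX a (t+p) (s+q) \<and> HX a (t-p) (s-q)"
proof -
  from H have s1: "\<bar>s\<bar> \<le> 1" and ts: "\<bar>t\<bar> + (1-a)*\<bar>s\<bar> \<le> 1" unfolding HX_def by auto
  have sa: "(1-a)*\<bar>s\<bar> \<ge> 0" using a1 by simp
  show ?thesis
  proof (cases "s = 0")
    case True
    then have "\<bar>t\<bar> < 1" using nv ts unfolding vertex_def by auto
    then show ?thesis using True
      by (intro exI[of _ "1 - \<bar>t\<bar>"] exI[of _ 0]) (auto simp: HX_def abs_if)
  next
    case s0: False
    show ?thesis
    proof (cases "\<bar>s\<bar> = 1")
      case True
      have "\<bar>t\<bar> \<le> a" using ts True by simp
      with nv True have "\<bar>t\<bar> < a" unfolding vertex_def by auto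
      then show ?thesis using True a0 a1
        by (intro exI[of _ "a - \<bar>t\<bar>"] exI[of _ 0]) (auto simp: HX_def abs_if)
    next
      case False
      then have s1': "\<bar>s\<bar> < 1" using s1 by simp
      have sp: "\<bar>s\<bar> > 0" using s0 by simp
      show ?thesis
      proof (cases "\<bar>t\<bar> + (1-a)*\<bar>s\<bar> < 1")
        case True
        define d where "d = min (min \<bar>s\<bar> (1-\<bar>s\<bar>)) (1 - \<bar>t\<bar> - (1-a)*\<bar>s\<bar>)"
        have d0: "d > 0" using True sp s1' unfolding d_def by auto
        have d1: "\<bar>s\<bar> + d \<le> 1" "d \<le> 1 - \<bar>t\<bar> - (1-a)*\<bar>s\<bar>" unfolding d_def by auto
        have ad: "(1-a)*d \<le> d" using a0 d0 by (simp add: algebra_simps)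
        have "\<bar>s + d\<bar> \<le> \<bar>s\<bar> + d" "\<bar>s - d\<bar> \<le> \<bar>s\<bar> + d" using d0 by auto
        then have "(1-a)*\<bar>s + d\<bar> \<le> (1-a)*(\<bar>s\<bar> + d)" "(1-a)*\<bar>s - d\<bar> \<le> (1-a)*(\<bar>s\<bar> + d)"
          using a1 by (auto intro: mult_left_mono)
        then show ?thesis using d0 d1 ad \<open>\<bar>s + d\<bar> \<le> \<bar>s\<bar> + d\<close> \<open>\<bar>s - d\<bar> \<le> \<bar>s\<bar> + d\<close>
          by (intro exI[of _ 0] exI[of _ d]) (auto simp: HX_def algebra_simps)
      next
        case False
        then have eq: "\<bar>t\<bar> + (1-a)*\<bar>s\<bar> = 1" using ts by simp
        have "(1-a)*\<bar>s\<bar> = \<bar>s\<bar> - a*\<bar>s\<bar>" by (simp add: algebra_simps)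
        moreover have "a*\<bar>s\<bar> \<ge> 0" using a0 by simp
        ultimately have "(1-a)*\<bar>s\<bar> < 1" using s1' by linarith
        then have tp: "\<bar>t\<bar> > 0" using eq by simp
        define d where "d = min (min \<bar>s\<bar> (1-\<bar>s\<bar>)) \<bar>t\<bar>"
        have d0: "d > 0" using tp sp s1' unfolding d_def by auto
        have d1: "d \<le> \<bar>s\<bar>" "\<bar>s\<bar> + d \<le> 1" "d \<le> \<bar>t\<bar>" unfolding d_def by auto
        have ad: "(1-a)*d \<le> d" "0 \<le> (1-a)*d" using a0 a1 d0 by (auto simp: algebra_simps)
        have e1: "\<bar>t + sgn t * ((1-a)*d)\<bar> = \<bar>t\<bar> + (1-a)*d" by (rule sgn_abs_add) (use ad tp in auto)
        have e2: "\<bar>t - sgn t * ((1-a)*d)\<bar> = \<bar>t\<bar> - (1-a)*d" by (rule sgn_abs_sub) (use ad d1 in auto)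
        have e3: "\<bar>s - sgn s * d\<bar> = \<bar>s\<bar> - d" by (rule sgn_abs_sub) (use d0 d1 in auto)
        have e4: "\<bar>s + sgn s * d\<bar> = \<bar>s\<bar> + d" by (rule sgn_abs_add) (use d0 s0 in auto)
        have r1: "s + - (sgn s * d) = s - sgn s * d" "s - - (sgn s * d) = s + sgn s * d" by simp_all
        have "HX a (t + sgn t * ((1-a)*d)) (s + - (sgn s * d))"
          unfolding HX_def r1 e1 e3 using eq d1 s1' d0 by (simp add: algebra_simps)
        moreover have "HX a (t - sgn t * ((1-a)*d)) (s - - (sgn s * d))"
          unfolding HX_def r1 e2 e4 using eq d1 by (simp add: algebra_simps)
        moreover have "- (sgn s * d) \<noteq> 0" using s0 d0 by (simp add: sgn_if)
        ultimately show ?thesis by blast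
      qed
    qed
  qed
qed

lemma hexbound:
  assumes a0: "0 < a" and a1: "a < 1" and H: "HX a t s"
    and X: "0 \<le> X" "X \<le> M" and Z: "0 \<le> Z" "a*X + Z \<le> M"
  shows "\<bar>t\<bar>*X + \<bar>s\<bar>*Z \<le> M"
proof -
  from H have s1: "\<bar>s\<bar> \<le> 1" and ts: "\<bar>t\<bar> + (1-a)*\<bar>s\<bar> \<le> 1" unfolding HX_def by auto
  have "\<bar>s\<bar>*Z \<le> \<bar>s\<bar>*(M - a*X)" using Z by (intro mult_left_mono) auto
  moreover have "\<bar>t\<bar>*X + \<bar>s\<bar>*(M - a*X) \<le> M"
  proof (cases "\<bar>t\<bar> \<ge> a*\<bar>s\<bar>")
    case True
    have "(\<bar>t\<bar> - a*\<bar>s\<bar>)*X \<le> (\<bar>t\<bar> - a*\<bar>s\<bar>)*M" using True X by (intro mult_left_mono) auto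
    moreover have "(\<bar>t\<bar> + (1-a)*\<bar>s\<bar>) * M \<le> 1 * M" using ts X by (intro mult_right_mono) auto
    ultimately show ?thesis by (simp add: algebra_simps)
  next
    case False
    have "(\<bar>t\<bar> - a*\<bar>s\<bar>)*X \<le> 0" using False X by (simp add: mult_nonpos_nonneg)
    moreover have "\<bar>s\<bar> * M \<le> 1 * M" using s1 X by (intro mult_right_mono) auto
    ultimately show ?thesis by (simp add: algebra_simps)
  qed
  ultimately show ?thesis by simp
qed




context hexa begin

definition psi :: "real \<Rightarrow> real \<Rightarrow> nat \<Rightarrow> (nat \<Rightarrow>\<^sub>C real) \<Rightarrow> real" where
  "psi t s m y = (if y \<in> XX then t * apply_bcontfun y 0 + s * zc y m else 0)"


lemma sgn_mult_self_abs: "sgn (x::real) * x = \<bar>x\<bar>" by (simp add: sgn_if)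

lemma psi_bound: "HX a t s \<Longrightarrow> y \<in> XX \<Longrightarrow> \<bar>psi t s m y\<bar> \<le> norm y"
proof -
  assume H: "HX a t s" and y: "y \<in> XX"
  have "\<bar>psi t s m y\<bar> \<le> \<bar>t\<bar> * \<bar>apply_bcontfun y 0\<bar> + \<bar>s\<bar> * \<bar>zc y m\<bar>"
    unfolding psi_def using y by (simp add: abs_mult[symmetric] abs_triangle_ineq)
  also have "\<dots> \<le> norm y"
    by (rule hexbound[OF a0 a1 H]) (use coord_le[of y 0] norm_XX_ge[OF y, of m] in auto)
  finally show ?thesis .
qed

lemma psi_dual: "HX a t s \<Longrightarrow> psi t s m \<in> dual_ball XX 1"
proof -
  assume H: "HX a t s"
  have "psi t s m (x + y) = psi t s m x + psi t s m y" if "x \<in> XX" "y \<in> XX" for x y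
    using that subspace_add[OF subspace_XX that] by (simp add: psi_def zc_add algebra_simps)
  moreover have "psi t s m (c *\<^sub>R x) = c * psi t s m x" if "x \<in> XX" for c x
    using that subspace_scale[OF subspace_XX that] by (simp add: psi_def zc_scale algebra_simps)
  moreover have "psi t s m z = 0" if "z \<notin> XX" for z using that by (simp add: psi_def)
  moreover have "\<forall>x\<in>XX. \<bar>psi t s m x\<bar> \<le> 1 * norm x" using psi_bound[OF H] by simp
  ultimately show ?thesis unfolding dual_ball_def dual_space_def by blast
qed

lemma psi_u0: "psi t s m u0 = t" by (simp add: psi_def u0_XX u0_apply zc_u0)
lemma psi_vv: "psi t s m (vv k) = (if k = m then s else 0)" by (simp add: psi_def vv_XX zc_vv)

lemma ball_HX:
  assumes h: "h \<in> dual_ball XX 1"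
  shows "HX a (h u0) (h (vv m))"
proof -
  have hd: "h \<in> dual_space XX" and hb: "\<And>x. x \<in> XX \<Longrightarrow> \<bar>h x\<bar> \<le> norm x" using h unfolding dual_ball_def by auto
  have 1: "\<bar>h (vv m)\<bar> \<le> 1" using hb[OF vv_XX, of m] norm_vv[of m] by simp
  define w where "w = sgn (h u0) *\<^sub>R u0 + ((1-a) * sgn (h (vv m))) *\<^sub>R vv m"
  have wX: "w \<in> XX" unfolding w_def
    by (intro subspace_add[OF subspace_XX] subspace_scale[OF subspace_XX] u0_XX vv_XX)
  have hw: "h w = \<bar>h u0\<bar> + (1-a)*\<bar>h (vv m)\<bar>"
    unfolding w_def
    by (simp add: dual_add[OF hd] dual_scale[OF hd] subspace_scale[OF subspace_XX] u0_XX vv_XX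
        mult.assoc sgn_mult_self_abs)
  have w0: "apply_bcontfun w 0 = sgn (h u0)" unfolding w_def by (simp add: u0_apply)
  have wz: "zc w n = (if n = m then (1-a) * sgn (h (vv m)) else 0)" for n
    unfolding w_def by (simp add: zc_add zc_scale zc_u0 zc_vv)
  have "norm w \<le> 1"
  proof (rule norm_XX_le[OF wX])
    show "\<bar>apply_bcontfun w 0\<bar> \<le> 1" unfolding w0 by (simp add: abs_sgn sgn_if)
    fix n
    have "\<bar>sgn (h u0)\<bar> \<le> 1" "\<bar>sgn (h (vv m))\<bar> \<le> 1" by (simp_all add: abs_sgn sgn_if)
    then have "a * \<bar>sgn (h u0)\<bar> \<le> a" "\<bar>(1-a) * sgn (h (vv m))\<bar> \<le> 1 - a"
      using a0 a1 by (auto simp: abs_mult intro: mult_left_le)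
    then show "a * \<bar>apply_bcontfun w 0\<bar> + \<bar>zc w n\<bar> \<le> 1" unfolding w0 wz using a1 by auto
  qed
  then have "\<bar>h u0\<bar> + (1-a)*\<bar>h (vv m)\<bar> \<le> 1" using hb[OF wX] hw by simp
  with 1 show ?thesis unfolding HX_def by simp
qed

lemma dual_space_diff:
  assumes f: "f \<in> dual_space XX" and g: "g \<in> dual_space XX"
  shows "(\<lambda>x. f x - g x) \<in> dual_space XX"
proof -
  obtain Cf where Cf: "\<forall>x\<in>XX. \<bar>f x\<bar> \<le> Cf * norm x" using dual_bound[OF f] by blast
  obtain Cg where Cg: "\<forall>x\<in>XX. \<bar>g x\<bar> \<le> Cg * norm x" using dual_bound[OF g] by blast
  have "\<forall>x\<in>XX. \<bar>f x - g x\<bar> \<le> (Cf + Cg) * norm x"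
  proof
    fix x assume "x \<in> XX"
    then have "\<bar>f x\<bar> \<le> Cf * norm x" "\<bar>g x\<bar> \<le> Cg * norm x" using Cf Cg by auto
    then show "\<bar>f x - g x\<bar> \<le> (Cf + Cg) * norm x" by (simp add: algebra_simps)
  qed
  moreover have "(\<lambda>x. f x - g x) (x + y) = (\<lambda>x. f x - g x) x + (\<lambda>x. f x - g x) y" if "x \<in> XX" "y \<in> XX" for x y
    using dual_add[OF f that] dual_add[OF g that] by simp
  moreover have "(\<lambda>x. f x - g x) (c *\<^sub>R x) = c * (\<lambda>x. f x - g x) x" if "x \<in> XX" for c x
    using dual_scale[OF f that] dual_scale[OF g that] by (simp add: algebra_simps)
  moreover have "(\<lambda>x. f x - g x) z = 0" if "z \<notin> XX" for z using dual_out[OF f that] dual_out[OF g that] by simp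
  ultimately show ?thesis unfolding dual_space_def by blast
qed

lemma ball_space: "h \<in> dual_ball XX r \<Longrightarrow> h \<in> dual_space XX" unfolding dual_ball_def by auto
lemma ball_bound: "h \<in> dual_ball XX r \<Longrightarrow> x \<in> XX \<Longrightarrow> \<bar>h x\<bar> \<le> r * norm x" unfolding dual_ball_def by auto
lemma ext_ball: "h \<in> dual_ext XX \<Longrightarrow> h \<in> dual_ball XX 1" unfolding dual_ext_def by auto
lemma ext_mid: "h \<in> dual_ext XX \<Longrightarrow> g1 \<in> dual_ball XX 1 \<Longrightarrow> g2 \<in> dual_ball XX 1 \<Longrightarrow>
   (\<And>x. h x = (g1 x + g2 x) / 2) \<Longrightarrow> g1 = g2"
  unfolding dual_ext_def by (auto simp: fun_eq_iff)

lemma pair_zero: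
  assumes h: "h \<in> dual_ext XX" and nm: "n \<noteq> m"
  shows "h (vv n) = 0 \<or> h (vv m) = 0"
proof (rule ccontr)
  assume "\<not> (h (vv n) = 0 \<or> h (vv m) = 0)"
  then have cn: "h (vv n) \<noteq> 0" and cm: "h (vv m) \<noteq> 0" by auto
  have hb: "h \<in> dual_ball XX 1" using ext_ball[OF h] .
  have hd: "h \<in> dual_space XX" using ball_space[OF hb] .
  define sn where "sn = sgn (h (vv n))"
  define sm where "sm = sgn (h (vv m))"
  define lam where "lam = \<bar>h (vv n)\<bar> + \<bar>h (vv m)\<bar>"
  have lam0: "lam > 0" unfolding lam_def using cn by (simp add: add_pos_nonneg)
  have sn1: "\<bar>sn\<bar> = 1" "sn * h (vv n) = \<bar>h (vv n)\<bar>" "h (vv n) = sn * \<bar>h (vv n)\<bar>"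
    unfolding sn_def using cn by (auto simp: sgn_if)
  have sm1: "\<bar>sm\<bar> = 1" "sm * h (vv m) = \<bar>h (vv m)\<bar>" "h (vv m) = sm * \<bar>h (vv m)\<bar>"
    unfolding sm_def using cm by (auto simp: sgn_if)
  define G where "G e y = (if y \<in> XX then h y + e * (sn * zc y n - sm * zc y m) else 0)" for e y
  have Gball: "G e \<in> dual_ball XX 1" if e: "\<bar>e\<bar> \<le> \<bar>h (vv n)\<bar>" "\<bar>e\<bar> \<le> \<bar>h (vv m)\<bar>" for e
  proof -
    have bnd: "\<bar>G e y\<bar> \<le> norm y" if y: "y \<in> XX" for y
    proof -
      define zn where "zn = zc y n"
      define zm where "zm = zc y m"
      define M0 where "M0 = max \<bar>zn\<bar> \<bar>zm\<bar>"
      define V where "V = (h (vv n) + e * sn) * zn + (h (vv m) - e * sm) * zm"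
      have an: "\<bar>h (vv n) + e * sn\<bar> = \<bar>h (vv n)\<bar> + e"
      proof -
        have "h (vv n) + e * sn = sn * (\<bar>h (vv n)\<bar> + e)" unfolding sn_def using cn by (auto simp: sgn_if algebra_simps)
        then show ?thesis using sn1(1) e by (simp add: abs_mult)
      qed
      have am: "\<bar>h (vv m) - e * sm\<bar> = \<bar>h (vv m)\<bar> - e"
      proof -
        have "h (vv m) - e * sm = sm * (\<bar>h (vv m)\<bar> - e)" unfolding sm_def using cm by (auto simp: sgn_if algebra_simps)
        then show ?thesis using sm1(1) e by (simp add: abs_mult)
      qed
      have "\<bar>V\<bar> \<le> \<bar>(h (vv n) + e * sn) * zn\<bar> + \<bar>(h (vv m) - e * sm) * zm\<bar>"
        unfolding V_def by (rule abs_triangle_ineq)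
      also have "\<dots> = (\<bar>h (vv n)\<bar> + e) * \<bar>zn\<bar> + (\<bar>h (vv m)\<bar> - e) * \<bar>zm\<bar>"
        unfolding abs_mult an am ..
      also have "\<dots> \<le> (\<bar>h (vv n)\<bar> + e) * M0 + (\<bar>h (vv m)\<bar> - e) * M0"
        using e unfolding M0_def by (intro add_mono mult_left_mono) auto
      also have "\<dots> = lam * M0" unfolding lam_def by (simp add: algebra_simps)
      finally have V: "\<bar>V\<bar> \<le> lam * M0" .
      have VM: "\<bar>s * V / lam\<bar> \<le> M0" if "\<bar>s\<bar> = 1" for s
        using V lam0 that by (simp add: abs_mult abs_divide divide_le_eq mult.commute)
      define y' where "y' = y + (sn * V / lam - zn) *\<^sub>R vv n + (sm * V / lam - zm) *\<^sub>R vv m"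
      have y'X: "y' \<in> XX" unfolding y'_def
        by (intro subspace_add[OF subspace_XX] subspace_scale[OF subspace_XX] y vv_XX)
      have "h y' = h y + (sn * V / lam - zn) * h (vv n) + (sm * V / lam - zm) * h (vv m)"
        unfolding y'_def
        by (simp add: dual_add[OF hd] dual_scale[OF hd] y vv_XX subspace_add[OF subspace_XX]
            subspace_scale[OF subspace_XX])
      also have "\<dots> = h y + V * ((sn * h (vv n) + sm * h (vv m)) / lam) - zn * h (vv n) - zm * h (vv m)"
        by (simp add: algebra_simps add_divide_distrib)
      also have "\<dots> = h y + V - zn * h (vv n) - zm * h (vv m)"
        using sn1 sm1 lam0 unfolding lam_def by simp
      also have "\<dots> = G e y" unfolding G_def V_def zn_def zm_def using y by (simp add: algebra_simps)
      finally have hy': "h y' = G e y" .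
      have "norm y' \<le> norm y"
      proof (rule norm_XX_le[OF y'X])
        have "apply_bcontfun y' 0 = apply_bcontfun y 0" unfolding y'_def by simp
        then show y0: "\<bar>apply_bcontfun y' 0\<bar> \<le> norm y" using coord_le[of y 0] by simp
        have Mn: "a * \<bar>apply_bcontfun y 0\<bar> + M0 \<le> norm y"
          unfolding M0_def zn_def zm_def using norm_XX_ge[OF y, of n] norm_XX_ge[OF y, of m] by auto
        fix k
        have zk: "zc y' k = (if k = n then sn * V / lam else if k = m then sm * V / lam else zc y k)"
          unfolding y'_def using nm by (simp add: zc_add zc_scale zc_vv zn_def zm_def)
        show "a * \<bar>apply_bcontfun y' 0\<bar> + \<bar>zc y' k\<bar> \<le> norm y"
          unfolding \<open>apply_bcontfun y' 0 = apply_bcontfun y 0\<close> zk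
          using Mn VM[OF sn1(1)] VM[OF sm1(1)] norm_XX_ge[OF y, of k] by auto
      qed
      then show ?thesis using ball_bound[OF hb y'X] hy' by simp
    qed
    have "G e (x + y) = G e x + G e y" if "x \<in> XX" "y \<in> XX" for x y
      using that subspace_add[OF subspace_XX that] by (simp add: G_def zc_add dual_add[OF hd] algebra_simps)
    moreover have "G e (c *\<^sub>R x) = c * G e x" if "x \<in> XX" for c x
      using that subspace_scale[OF subspace_XX that] by (simp add: G_def zc_scale dual_scale[OF hd] algebra_simps)
    moreover have "G e z = 0" if "z \<notin> XX" for z using that by (simp add: G_def)
    moreover have "\<forall>x\<in>XX. \<bar>G e x\<bar> \<le> 1 * norm x" using bnd by simp
    ultimately show ?thesis unfolding dual_ball_def dual_space_def by blast
  qed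
  define e0 where "e0 = min \<bar>h (vv n)\<bar> \<bar>h (vv m)\<bar>"
  have e0: "e0 > 0" unfolding e0_def using cn cm by simp
  have g1: "G e0 \<in> dual_ball XX 1" by (rule Gball) (auto simp: e0_def)
  have g2: "G (-e0) \<in> dual_ball XX 1" by (rule Gball) (auto simp: e0_def)
  have "h x = (G e0 x + G (-e0) x) / 2" for x
    using dual_out[OF hd, of x] by (simp add: G_def)
  then have "G e0 = G (-e0)" by (rule ext_mid[OF h g1 g2])
  then have "G e0 (vv n) = G (-e0) (vv n)" by simp
  then have "e0 * sn = 0" using nm by (simp add: G_def vv_XX zc_vv)
  then show False using e0 sn1 by auto
qed

lemma ext_struct:
  assumes h: "h \<in> dual_ext XX"
  shows "\<exists>m. (\<forall>k. k \<noteq> m \<longrightarrow> h (vv k) = 0) \<and> vertex a (h u0) (h (vv m))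
             \<and> h = psi (h u0) (h (vv m)) m"
proof -
  have hb: "h \<in> dual_ball XX 1" using ext_ball[OF h] .
  have hd: "h \<in> dual_space XX" using ball_space[OF hb] .
  obtain m where m: "\<forall>k. k \<noteq> m \<longrightarrow> h (vv k) = 0"
  proof (cases "\<exists>k. h (vv k) \<noteq> 0")
    case True
    then obtain m where "h (vv m) \<noteq> 0" by blast
    then show ?thesis using pair_zero[OF h] that by blast
  next
    case False then show ?thesis using that by blast
  qed
  define t where "t = h u0"
  define s where "s = h (vv m)"
  have H: "HX a t s" unfolding t_def s_def by (rule ball_HX[OF hb])
  have hpsi: "h = psi t s m"
  proof
    fix y
    have d: "(\<lambda>x. h x - psi t s m x) \<in> dual_space XX"
      by (rule dual_space_diff[OF hd ball_space[OF psi_dual[OF H]]])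
    have "(\<lambda>x. h x - psi t s m x) y = 0"
      by (rule determ[OF d]) (use m in \<open>auto simp: psi_u0 psi_vv t_def s_def\<close>)
    then show "h y = psi t s m y" by simp
  qed
  have "vertex a t s"
  proof (rule ccontr)
    assume nv: "\<not> vertex a t s"
    obtain p q where pq: "p \<noteq> 0 \<or> q \<noteq> 0" "HX a (t+p) (s+q)" "HX a (t-p) (s-q)"
      using hexagon[OF a0 a1 H nv] by blast
    have "h x = (psi (t+p) (s+q) m x + psi (t-p) (s-q) m x) / 2" for x
      unfolding hpsi psi_def by (simp add: algebra_simps)
    then have eq: "psi (t+p) (s+q) m = psi (t-p) (s-q) m"
      by (rule ext_mid[OF h psi_dual[OF pq(2)] psi_dual[OF pq(3)]])
    have "t + p = t - p" using arg_cong[OF eq, of "\<lambda>f. f u0"] by (simp add: psi_u0)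
    moreover have "s + q = s - q" using arg_cong[OF eq, of "\<lambda>f. f (vv m)"] by (simp add: psi_vv)
    ultimately show False using pq(1) by simp
  qed
  then show ?thesis using m hpsi unfolding t_def s_def by blast
qed

end



context hexa begin

lemma ext_vals:
  assumes h: "h \<in> dual_ext XX"
  shows "\<bar>h u0\<bar> = 1 \<or> \<bar>h u0\<bar> = a" "h (vv k) = 0 \<or> \<bar>h (vv k)\<bar> = 1"
  using ext_struct[OF h] unfolding vertex_def by metis+

lemma vals_eq1:
  assumes "\<bar>x\<bar> = 1 \<or> \<bar>x\<bar> = a" "\<bar>y\<bar> = 1 \<or> \<bar>y\<bar> = a" "\<bar>x - y\<bar> < min (1 - a) (2*a)"
  shows "x = y"
  using assms a0 a1 by (auto simp: abs_if split: if_splits)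

lemma vals_eq2:
  assumes "x = 0 \<or> \<bar>x\<bar> = 1" "y = 0 \<or> \<bar>y\<bar> = (1::real)" "\<bar>x - y\<bar> < 1"
  shows "x = y"
  using assms by (auto simp: abs_if split: if_splits)

lemma unique_ext:
  assumes h1: "h1 \<in> dual_ext XX" and h2: "h2 \<in> dual_ext XX"
    and e0: "h1 u0 = h2 u0" and ek: "\<And>k. k < N \<Longrightarrow> h1 (vv k) = h2 (vv k)"
    and bad: "\<bar>h1 u0\<bar> = 1 \<or> (\<exists>k<N. h1 (vv k) \<noteq> 0)"
  shows "h1 = h2"
proof -
  obtain m1 where m1: "\<forall>k. k \<noteq> m1 \<longrightarrow> h1 (vv k) = 0" "vertex a (h1 u0) (h1 (vv m1))"
    "h1 = psi (h1 u0) (h1 (vv m1)) m1" using ext_struct[OF h1] by blast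
  obtain m2 where m2: "\<forall>k. k \<noteq> m2 \<longrightarrow> h2 (vv k) = 0" "vertex a (h2 u0) (h2 (vv m2))"
    "h2 = psi (h2 u0) (h2 (vv m2)) m2" using ext_struct[OF h2] by blast
  show ?thesis
  proof (cases "\<bar>h1 u0\<bar> = 1")
    case True
    then have "h1 (vv m1) = 0" "h2 (vv m2) = 0" using m1(2) m2(2) e0 a1 unfolding vertex_def by auto
    have "h1 = psi (h1 u0) 0 m1" using m1(3) \<open>h1 (vv m1) = 0\<close> by simp
    also have "\<dots> = psi (h1 u0) 0 m2" by (simp add: psi_def fun_eq_iff)
    also have "\<dots> = h2" using m2(3) \<open>h2 (vv m2) = 0\<close> e0 by simp
    finally show ?thesis .
  next
    case False
    then obtain k where k: "k < N" "h1 (vv k) \<noteq> 0" using bad by blast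
    then have "m1 = k" "m2 = k" using m1(1) m2(1) ek[OF k(1)] by metis+
    then show ?thesis using m1(3) m2(3) e0 ek[OF k(1)] by simp
  qed
qed

lemma acc_ball:
  assumes g: "g \<in> weak_star_acc XX (dual_ext XX)"
  shows "g \<in> dual_ball XX a"
proof -
  have gd: "g \<in> dual_space XX" and
    acc: "\<And>F \<delta>. finite F \<Longrightarrow> F \<subseteq> XX \<Longrightarrow> \<delta> > 0 \<Longrightarrow> \<exists>h\<in>dual_ext XX. h \<noteq> g \<and> (\<forall>x\<in>F. \<bar>h x - g x\<bar> < \<delta>)"
    using g unfolding weak_star_acc_def by auto
  obtain C0 where C0: "\<forall>x\<in>XX. \<bar>g x\<bar> \<le> C0 * norm x" using dual_bound[OF gd] by blast
  define C where "C = max C0 0"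
  have C: "\<forall>x\<in>XX. \<bar>g x\<bar> \<le> C * norm x"
    using C0 unfolding C_def by (meson max.cobounded1 mult_right_mono norm_ge_zero order_trans)
  have Cp: "C \<ge> 0" unfolding C_def by simp
  define d0 where "d0 = min (min ((1-a)/2) a) (1/2)"
  have d0: "d0 > 0" unfolding d0_def using a0 a1 by simp
  have main: "\<bar>g y\<bar> \<le> a * norm y + \<eta> * (norm y + C)" if y: "y \<in> XX" and eta: "\<eta> > 0" for y \<eta>
  proof -
    obtain N where N: "\<And>k. k \<ge> N \<Longrightarrow> \<bar>zc y k\<bar> < \<eta>"
      using zc_tendsto[OF y] eta unfolding LIMSEQ_def dist_norm by auto
    define \<delta> where "\<delta> = min d0 (\<eta> / (real N + 1))"
    have dp: "\<delta> > 0" unfolding \<delta>_def using d0 eta by simp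
    define F1 where "F1 = insert u0 (vv ` {..<N})"
    have F1: "finite F1" "F1 \<subseteq> XX" unfolding F1_def using u0_XX vv_XX by auto
    obtain h1 where h1: "h1 \<in> dual_ext XX" "h1 \<noteq> g" "\<forall>x\<in>F1. \<bar>h1 x - g x\<bar> < \<delta>"
      using acc[OF F1 dp] by blast
    have h1d: "h1 \<in> dual_space XX" using ball_space[OF ext_ball[OF h1(1)]] .
    have good: "\<not> (\<bar>h1 u0\<bar> = 1 \<or> (\<exists>k<N. h1 (vv k) \<noteq> 0))"
    proof
      assume bad: "\<bar>h1 u0\<bar> = 1 \<or> (\<exists>k<N. h1 (vv k) \<noteq> 0)"
      obtain p where p: "h1 p \<noteq> g p" using h1(2) by (auto simp: fun_eq_iff)
      have pX: "p \<in> XX" using p dual_out[OF h1d] dual_out[OF gd] by metis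
      define \<delta>2 where "\<delta>2 = min \<delta> \<bar>h1 p - g p\<bar>"
      have d2: "\<delta>2 > 0" unfolding \<delta>2_def using dp p by simp
      obtain h2 where h2: "h2 \<in> dual_ext XX" "h2 \<noteq> g" "\<forall>x\<in>insert p F1. \<bar>h2 x - g x\<bar> < \<delta>2"
        using acc[of "insert p F1" \<delta>2] F1 pX d2 by blast
      have close: "\<bar>h2 x - h1 x\<bar> < 2 * \<delta>" if "x \<in> F1" for x
        using h1(3) h2(3) that unfolding \<delta>2_def by fastforce
      have "\<delta> \<le> d0" by (simp add: \<delta>_def)
      moreover have "d0 \<le> (1-a)/2" "d0 \<le> a" "d0 \<le> 1/2" unfolding d0_def
        by (meson min.cobounded1 min.cobounded2 order_trans)+
      ultimately have "2 * \<delta> \<le> min (1 - a) (2*a)" "2 * \<delta> \<le> 1" by auto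
      then have e0: "h2 u0 = h1 u0"
        using close[of u0] ext_vals(1)[OF h1(1)] ext_vals(1)[OF h2(1)] vals_eq1 unfolding F1_def
        by (metis insertI1 less_le_trans)
      have ek: "h2 (vv k) = h1 (vv k)" if "k < N" for k
        using close[of "vv k"] ext_vals(2)[OF h1(1), of k] ext_vals(2)[OF h2(1), of k] vals_eq2
          \<open>2 * \<delta> \<le> 1\<close> that unfolding F1_def
        by (metis image_eqI insertI2 lessThan_iff less_le_trans)
      have "h1 = h2" by (rule unique_ext[OF h1(1) h2(1)]) (use e0 ek bad in auto)
      then show False using h2(3) unfolding \<delta>2_def by auto
    qed
    have gu: "\<bar>g u0\<bar> \<le> a + \<delta>"
    proof -
      have "\<bar>h1 u0\<bar> = a" using good ext_vals(1)[OF h1(1)] by auto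
      moreover have "\<bar>h1 u0 - g u0\<bar> < \<delta>" using h1(3) unfolding F1_def by auto
      ultimately show ?thesis by linarith
    qed
    have gv: "\<bar>g (vv k)\<bar> \<le> \<delta>" if "k < N" for k
    proof -
      have "h1 (vv k) = 0" using good that by auto
      moreover have "\<bar>h1 (vv k) - g (vv k)\<bar> < \<delta>" using h1(3) that unfolding F1_def by auto
      ultimately show ?thesis by simp
    qed
    have ny: "\<bar>zc y k\<bar> \<le> norm y" for k
    proof -
      have "a * \<bar>apply_bcontfun y 0\<bar> \<ge> 0" using a0 by simp
      then show ?thesis using norm_XX_ge[OF y, of k] by linarith
    qed
    have y0: "\<bar>apply_bcontfun y 0\<bar> \<le> norm y" by (rule coord_le)
    have "\<bar>g (trunc N y)\<bar> \<le> \<bar>apply_bcontfun y 0 * g u0\<bar> + \<bar>\<Sum>k<N. zc y k * g (vv k)\<bar>"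
      unfolding dual_trunc[OF gd] by (rule abs_triangle_ineq)
    also have "\<dots> \<le> norm y * (a + \<delta>) + (\<Sum>k<N. norm y * \<delta>)"
    proof (rule add_mono)
      show "\<bar>apply_bcontfun y 0 * g u0\<bar> \<le> norm y * (a + \<delta>)"
        unfolding abs_mult by (rule mult_mono[OF y0 gu]) auto
      have "\<bar>\<Sum>k<N. zc y k * g (vv k)\<bar> \<le> (\<Sum>k<N. \<bar>zc y k * g (vv k)\<bar>)" by (rule sum_abs)
      also have "\<dots> \<le> (\<Sum>k<N. norm y * \<delta>)"
        unfolding abs_mult by (rule sum_mono, rule mult_mono) (use ny gv in auto)
      finally show "\<bar>\<Sum>k<N. zc y k * g (vv k)\<bar> \<le> (\<Sum>k<N. norm y * \<delta>)" .
    qed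
    also have "\<dots> = a * norm y + (real N + 1) * \<delta> * norm y" by (simp add: algebra_simps)
    also have "\<dots> \<le> a * norm y + \<eta> * norm y"
    proof -
      have "\<delta> \<le> \<eta> / (real N + 1)" by (simp add: \<delta>_def)
      then have "(real N + 1) * \<delta> \<le> (real N + 1) * (\<eta> / (real N + 1))" by (rule mult_left_mono) simp
      also have "\<dots> = \<eta>" by simp
      finally have "(real N + 1) * \<delta> \<le> \<eta>" .
      then show ?thesis by (intro add_left_mono mult_right_mono) auto
    qed
    finally have t1: "\<bar>g (trunc N y)\<bar> \<le> a * norm y + \<eta> * norm y" .
    have err: "norm (y - trunc N y) \<le> \<eta>" using N eta by (intro trunc_err[OF y]) (auto intro: less_imp_le)
    have "\<bar>g (y - trunc N y)\<bar> \<le> C * norm (y - trunc N y)"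
      using C subspace_diff[OF subspace_XX y trunc_XX] by blast
    also have "\<dots> \<le> C * \<eta>" using err Cp by (rule mult_left_mono)
    finally have t2: "\<bar>g y - g (trunc N y)\<bar> \<le> C * \<eta>" using dual_diff[OF gd y trunc_XX] by simp
    show ?thesis using t1 t2 by (simp add: algebra_simps)
  qed
  have "\<bar>g y\<bar> \<le> a * norm y" if y: "y \<in> XX" for y
  proof (rule ccontr)
    assume "\<not> ?thesis"
    then have pos: "\<bar>g y\<bar> - a * norm y > 0" by simp
    define \<eta> where "\<eta> = (\<bar>g y\<bar> - a * norm y) / (2 * (norm y + C + 1))"
    have den: "2 * (norm y + C + 1) > 0" using Cp by (simp add: add_nonneg_pos)
    have ep: "\<eta> > 0" unfolding \<eta>_def using pos den by simp
    have "\<eta> * (norm y + C) < \<eta> * (2 * (norm y + C + 1))" 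
    proof -
      have "0 < C + (norm y + 2)" by (rule add_nonneg_pos[OF Cp add_nonneg_pos[OF norm_ge_zero]]) simp
      then have aux: "norm y + C < 2 * (norm y + C + 1)" by (simp add: algebra_simps)
      show ?thesis by (rule mult_strict_left_mono[OF aux ep])
    qed
    also have "\<dots> = \<bar>g y\<bar> - a * norm y" unfolding \<eta>_def using den by simp
    finally show False using main[OF y ep] by simp
  qed
  then show ?thesis using gd unfolding dual_ball_def by blast
qed

end



context hexa begin

lemma vv_inj: "vv j = vv k \<Longrightarrow> j = k"
proof -
  assume "vv j = vv k"
  then have "apply_bcontfun (vv j) (2*k+1) = apply_bcontfun (vv k) (2*k+1)" by simp
  then show "j = k" by (simp add: vv_odd split: if_splits)
qed

lemma indep_vv: "independent (range vv)"
  unfolding real_vector.independent_explicit_finite_subsets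
proof (intro allI impI ballI)
  fix S u v
  assume S: "S \<subseteq> range vv" "finite S" and sum0: "(\<Sum>v\<in>S. u v *\<^sub>R v) = 0" and v: "v \<in> S"
  obtain k where k: "v = vv k" using S v by blast
  have "apply_bcontfun (\<Sum>v\<in>S. u v *\<^sub>R v) (2*k+1) = 0" using sum0 by simp
  then have "(\<Sum>w\<in>S. u w * apply_bcontfun w (2*k+1)) = 0" by (simp add: apply_sum[OF S(2)])
  moreover have "apply_bcontfun w (2*k+1) = (if w = v then 1 else 0)" if wS: "w \<in> S" for w
  proof -
    obtain j where j: "w = vv j" using S wS by blast
    show ?thesis using vv_inj[of j k] unfolding j k by (simp add: vv_odd)
  qed
  then have "(\<Sum>w\<in>S. u w * apply_bcontfun w (2*k+1)) = (\<Sum>w\<in>S. if w = v then u w else 0)"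
    by (intro sum.cong) auto
  ultimately have "(\<Sum>w\<in>S. if w = v then u w else 0) = 0" by simp
  then show "u v = 0" using v S(2) by (simp add: sum.delta')
qed

lemma infdim: "\<not> (\<exists>B. finite B \<and> XX \<subseteq> span B)"
proof
  assume "\<exists>B. finite B \<and> XX \<subseteq> span B"
  then obtain B where B: "finite B" "XX \<subseteq> span B" by blast
  have "range vv \<subseteq> span B" using B(2) vv_XX by blast
  then have "finite (range vv)" using independent_span_bound[OF B(1) indep_vv] by blast
  moreover have "inj vv" using vv_inj by (auto intro: injI)
  ultimately show False using finite_imageD by (metis infinite_UNIV_nat)
qed

lemma polyh: "II_polyhedral XX"
  unfolding II_polyhedral_def using a0 a1 acc_ball by blast

end

lemma slice_diam:
  fixes \<eta> :: real
  assumes e0: "0 < \<eta>" and e1: "\<eta> \<le> 1/8"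
  defines "a \<equiv> 1 - \<eta>"
  shows "\<exists>f \<in> dual_space (hexa.XX a). \<exists>\<alpha> > 0. (\<exists>x\<in>hexa.XX a. f x \<noteq> 0)
               \<and> diameter (slice (unit_ball_of (hexa.XX a)) f \<alpha>) \<le> 5 * \<eta>"
proof -
  interpret hexa a using e0 e1 unfolding a_def by unfold_locales auto
  define f where "f = psi 1 0 0"
  have H: "HX a 1 0" unfolding HX_def by simp
  have fb: "f \<in> dual_ball XX 1" unfolding f_def by (rule psi_dual[OF H])
  have fy: "f y = apply_bcontfun y 0" if "y \<in> XX" for y using that by (simp add: f_def psi_def)
  have fu: "f u0 = 1" unfolding f_def by (simp add: psi_u0)
  have u0b: "u0 \<in> unit_ball_of XX" unfolding unit_ball_of_def using u0_XX norm_u0 by (simp add: mem_cball_0)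
  have sup: "Sup (f ` unit_ball_of XX) = 1"
  proof (rule cSup_eq_maximum)
    show "1 \<in> f ` unit_ball_of XX" using u0b fu by (metis image_eqI)
    fix z assume "z \<in> f ` unit_ball_of XX"
    then obtain y where y: "y \<in> XX" "norm y \<le> 1" "z = f y" unfolding unit_ball_of_def by (auto simp: mem_cball_0)
    then show "z \<le> 1" using ball_bound[OF fb y(1)] by simp
  qed
  have sl: "y \<in> XX \<and> norm y \<le> 1 \<and> apply_bcontfun y 0 > 1 - \<eta>" if "y \<in> slice (unit_ball_of XX) f \<eta>" for y
    using that unfolding slice_def sup by (auto simp: unit_ball_of_def mem_cball_0 fy)
  have zb: "\<bar>zc y k\<bar> \<le> 2 * \<eta>" and y0: "1 - \<eta> < apply_bcontfun y 0" "apply_bcontfun y 0 \<le> 1"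
    if "y \<in> slice (unit_ball_of XX) f \<eta>" for y k
  proof -
    have y: "y \<in> XX" "norm y \<le> 1" "apply_bcontfun y 0 > 1 - \<eta>" using sl[OF that] by auto
    show "1 - \<eta> < apply_bcontfun y 0" using y by simp
    show "apply_bcontfun y 0 \<le> 1" using coord_le[of y 0] y by simp
    have "a * (1 - \<eta>) \<le> a * \<bar>apply_bcontfun y 0\<bar>" using y a0 by (intro mult_left_mono) auto
    moreover have "a * \<bar>apply_bcontfun y 0\<bar> + \<bar>zc y k\<bar> \<le> 1" using norm_XX_ge[OF y(1), of k] y by simp
    moreover have "a * (1 - \<eta>) = 1 - 2*\<eta> + \<eta>*\<eta>" unfolding a_def by (simp add: algebra_simps)
    moreover have "\<eta>*\<eta> \<ge> 0" by simp
    ultimately show "\<bar>zc y k\<bar> \<le> 2 * \<eta>" by linarith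
  qed
  have "diameter (slice (unit_ball_of XX) f \<eta>) \<le> 5 * \<eta>"
  proof (rule diameter_le)
    show "slice (unit_ball_of XX) f \<eta> \<noteq> {} \<or> 0 \<le> 5 * \<eta>" using e0 by simp
    fix y w assume y: "y \<in> slice (unit_ball_of XX) f \<eta>" and w: "w \<in> slice (unit_ball_of XX) f \<eta>"
    have yX: "y \<in> XX" and wX: "w \<in> XX" using sl[OF y] sl[OF w] by auto
    have d0: "\<bar>apply_bcontfun (y - w) 0\<bar> \<le> \<eta>" using y0[OF y] y0[OF w] by simp
    show "norm (y - w) \<le> 5 * \<eta>"
    proof (rule norm_XX_le[OF subspace_diff[OF subspace_XX yX wX]])
      show "\<bar>apply_bcontfun (y - w) 0\<bar> \<le> 5 * \<eta>" using d0 e0 by simp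
      fix k
      have "zc (y - w) k = zc y k - zc w k" unfolding zc_def by (simp add: field_simps)
      moreover have "a * \<bar>apply_bcontfun (y - w) 0\<bar> \<le> \<eta>"
        using d0 a0 a1 by (metis abs_ge_zero less_eq_real_def mult_left_le_one_le order_trans)
      ultimately show "a * \<bar>apply_bcontfun (y - w) 0\<bar> + \<bar>zc (y - w) k\<bar> \<le> 5 * \<eta>"
        using zb[OF y, of k] zb[OF w, of k] by linarith
    qed
  qed
  moreover have "f \<in> dual_space XX" by (rule ball_space[OF fb])
  moreover have "\<exists>x\<in>XX. f x \<noteq> 0" by (rule bexI[of _ u0]) (simp_all add: fu u0_XX)
  ultimately show ?thesis using e0 by blast
qed



theorem theorem2p1:
  fixes \<epsilon> :: real
  assumes "\<epsilon> > 0"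
  shows "\<exists>X :: (nat \<Rightarrow>\<^sub>C real) set.
           subspace X \<and> closed X \<and> \<not> (\<exists>B. finite B \<and> X \<subseteq> span B)
         \<and> II_polyhedral X
         \<and> (\<exists>f \<in> dual_space X. \<exists>\<alpha> > 0. (\<exists>x\<in>X. f x \<noteq> 0)
               \<and> diameter (slice (unit_ball_of X) f \<alpha>) < \<epsilon>)"
proof -
  define \<eta> where "\<eta> = min \<epsilon> 1 / 8"
  have e0: "0 < \<eta>" "\<eta> \<le> 1/8" using assms by (auto simp: \<eta>_def)
  have e1: "5 * \<eta> < \<epsilon>" using assms unfolding \<eta>_def by linarith
  interpret hexa "1 - \<eta>" using e0 by unfold_locales auto
  obtain f \<alpha> where f: "f \<in> dual_space XX" "\<alpha> > 0" "\<exists>x\<in>XX. f x \<noteq> 0"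
    "diameter (slice (unit_ball_of XX) f \<alpha>) \<le> 5 * \<eta>"
    using slice_diam[OF e0] by blast
  show ?thesis
  proof (intro exI[of _ XX] conjI)
    show "\<exists>f \<in> dual_space XX. \<exists>\<alpha> > 0. (\<exists>x\<in>XX. f x \<noteq> 0)
               \<and> diameter (slice (unit_ball_of XX) f \<alpha>) < \<epsilon>"
      using f e1 by (intro bexI[of _ f] exI[of _ \<alpha>]) auto
  qed (use subspace_XX closed_XX infdim polyh in auto)
qed

end
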